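(* Let $s_1=M[-1,1,0,0]+M[-1,-1,1,0]+M[1,-1,1,1]$. Then for every $n\ge2$, $$x_ns_1=x_{n+1}+q\,x_{n-1}y_1y_2$$ in the quantum cluster algebra $\mathcal{A}_q(B,\Lambda)$ of Kronecker type.
   Context: Based quantum torus: basis $M[a]$, $a\in\mathbb{Z}^4$, $M[a]M[b]=q^{\frac12a^T\Lambda b}M[a+b]$, with $B=\begin{pmatrix}0&2\\-2&0\\1&0\\0&1\end{pmatrix}$, $\Lambda=\begin{pmatrix}0&0&-1&0\\0&0&0&-1\\1&0&0&-2\\0&1&2&0\end{pmatrix}$; $x_1=M[e_1],x_2=M[e_2],y_1=M[e_3],y_2=M[e_4]$. $\mathcal{A}_q(B,\Lambda)$ is the Berenstein–Zelevinsky quantum cluster algebra; quantum mutation at $k$ replaces $x'_k$ by $M_{\Lambda'}[-e_k+\sum_{b'_{ik}>0}b'_{ik}e_i]+M_{\Lambda'}[-e_k-\sum_{b'_{ik}<0}b'_{ik}e_i]$. For $m\ge0$, $x_{m+3}$ is the quantum cluster variable produced at the $(m+1)$-st step of mutating the initial seed successively at $1,2,1,2,\dots$; e.g. $x_3=M[-1,2,0,0]+M[-1,0,1,0]$. *)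

theory Defs
  imports Main "HOL-Library.Poly_Mapping" "HOL-Library.Product_Plus"
begin

text \<open>An element of the torus is a finite
  Z-linear combination of the basis elements v^i M[a] (a in Z^4, i in Z), where
  v = q^(1/2); the key ((a, i)) carries the coefficient of v^i M[a].\<close>

type_synonym lat = "int \<times> int \<times> int \<times> int"
type_synonym qtorus = "(lat \<times> int) \<Rightarrow>\<^sub>0 int"

definition vec_of :: "lat \<Rightarrow> nat \<Rightarrow> int" where
  "vec_of a = (case a of (a0, a1, a2, a3) \<Rightarrow>
     (\<lambda>i. if i = 0 then a0 else if i = 1 then a1 else if i = 2 then a2 else if i = 3 then a3 else 0))"

definition lat_of :: "(nat \<Rightarrow> int) \<Rightarrow> lat" where
  "lat_of c = (c 0, c 1, c 2, c 3)"

text \<open>Indices 0..3 correspond to the indices 1..4 of the paper.\<close>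

definition Bmat :: "nat \<Rightarrow> nat \<Rightarrow> int" where
  "Bmat i j = (if (i, j) = (0, 1) then 2 else if (i, j) = (1, 0) then -2
     else if (i, j) = (2, 0) then 1 else if (i, j) = (3, 1) then 1 else 0)"

definition Lam :: "nat \<Rightarrow> nat \<Rightarrow> int" where
  "Lam i j = (if (i, j) = (0, 2) then -1 else if (i, j) = (1, 3) then -1
     else if (i, j) = (2, 0) then 1 else if (i, j) = (2, 3) then -2
     else if (i, j) = (3, 1) then 1 else if (i, j) = (3, 2) then 2 else 0)"

definition lam_form :: "lat \<Rightarrow> lat \<Rightarrow> int" where
  "lam_form a b = (\<Sum>i<4. \<Sum>j<4. vec_of a i * Lam i j * vec_of b j)"

text \<open>Basis element M[a], the element v = q^(1/2), and the twisted product
  M[a] M[b] = q^(a^T Lambda b / 2) M[a+b] = v^(a^T Lambda b) M[a+b].\<close>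

definition tM :: "lat \<Rightarrow> qtorus" where
  "tM a = Poly_Mapping.single (a, 0) 1"

definition tv :: qtorus where
  "tv = Poly_Mapping.single ((0, 0, 0, 0), 1) 1"

definition tmult :: "qtorus \<Rightarrow> qtorus \<Rightarrow> qtorus" where
  "tmult f g = (\<Sum>(a, i)\<in>Poly_Mapping.keys f. \<Sum>(b, j)\<in>Poly_Mapping.keys g.
      Poly_Mapping.single (a + b, i + j + lam_form a b) (Poly_Mapping.lookup f (a, i) * Poly_Mapping.lookup g (b, j)))"

text \<open>The quantum cluster algebra lives inside the skew field of
  fractions of the torus; every identity below is an identity in the ambient skew field.\<close>

definition torus_embedding :: "(qtorus \<Rightarrow> 'a::division_ring) \<Rightarrow> bool" where
  "torus_embedding \<phi> \<longleftrightarrow> inj \<phi> \<and> (\<forall>f g. \<phi> (f + g) = \<phi> f + \<phi> g)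
     \<and> (\<forall>f g. \<phi> (tmult f g) = \<phi> f * \<phi> g) \<and> \<phi> (tM (0, 0, 0, 0)) = 1"

text \<open>A quantum seed is given by its extended cluster X (X 0 .. X 3, the images M(e_i) of the
  toric frame), the exchange matrix B (4x2) and the compatible matrix Lambda (4x4).\<close>

definition frame :: "'a::division_ring \<Rightarrow> (nat \<Rightarrow> nat \<Rightarrow> int) \<Rightarrow> (nat \<Rightarrow> 'a) \<Rightarrow> (nat \<Rightarrow> int) \<Rightarrow> 'a" where
  "frame v L X c = v powi (\<Sum>j<4. \<Sum>l<j. c l * c j * L j l)
     * X 0 powi c 0 * X 1 powi c 1 * X 2 powi c 2 * X 3 powi c 3"

definition Emat :: "(nat \<Rightarrow> nat \<Rightarrow> int) \<Rightarrow> nat \<Rightarrow> nat \<Rightarrow> nat \<Rightarrow> int" where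
  "Emat B k i j = (if j \<noteq> k then (if i = j then 1 else 0)
     else if i = k then -1 else max 0 (- B i k))"

definition mut_B :: "(nat \<Rightarrow> nat \<Rightarrow> int) \<Rightarrow> nat \<Rightarrow> nat \<Rightarrow> nat \<Rightarrow> int" where
  "mut_B B k i j = (if i = k \<or> j = k then - B i j
     else B i j + (\<bar>B i k\<bar> * B k j + B i k * \<bar>B k j\<bar>) div 2)"

definition mut_L :: "(nat \<Rightarrow> nat \<Rightarrow> int) \<Rightarrow> (nat \<Rightarrow> nat \<Rightarrow> int) \<Rightarrow> nat \<Rightarrow> nat \<Rightarrow> nat \<Rightarrow> int" where
  "mut_L B L k i j = (\<Sum>a<4. \<Sum>b<4. Emat B k a i * L a b * Emat B k b j)"

definition mut_X :: "'a::division_ring \<Rightarrow> (nat \<Rightarrow> nat \<Rightarrow> int) \<Rightarrow> (nat \<Rightarrow> nat \<Rightarrow> int) \<Rightarrow> (nat \<Rightarrow> 'a) \<Rightarrow> nat \<Rightarrow> nat \<Rightarrow> 'a" where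
  "mut_X v B L X k = X(k :=
      frame v L X (\<lambda>i. (if i = k then -1 else 0) + max 0 (B i k))
    + frame v L X (\<lambda>i. (if i = k then -1 else 0) + max 0 (- B i k)))"

type_synonym 'a qseed = "(nat \<Rightarrow> 'a) \<times> (nat \<Rightarrow> nat \<Rightarrow> int) \<times> (nat \<Rightarrow> nat \<Rightarrow> int)"

definition mutate :: "'a::division_ring \<Rightarrow> nat \<Rightarrow> 'a qseed \<Rightarrow> 'a qseed" where
  "mutate v k S = (case S of (X, B, L) \<Rightarrow> (mut_X v B L X k, mut_B B k, mut_L B L k))"

definition init_seed :: "(qtorus \<Rightarrow> 'a::division_ring) \<Rightarrow> 'a qseed" where
  "init_seed \<phi> = ((\<lambda>i. \<phi> (tM (lat_of (\<lambda>j. if j = i then 1 else 0)))), Bmat, Lam)"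

fun seed_seq :: "(qtorus \<Rightarrow> 'a::division_ring) \<Rightarrow> nat \<Rightarrow> 'a qseed" where
  "seed_seq \<phi> 0 = init_seed \<phi>"
| "seed_seq \<phi> (Suc t) = mutate (\<phi> tv) (t mod 2) (seed_seq \<phi> t)"

text \<open>x_1 = M[e_1], x_2 = M[e_2], and x_(m+3) is the cluster variable produced at the
  (m+1)-st mutation step (the new entry at the mutated index m mod 2).
  x_0 is not used and is set to 0.\<close>

definition kron_x :: "(qtorus \<Rightarrow> 'a::division_ring) \<Rightarrow> nat \<Rightarrow> 'a" where
  "kron_x \<phi> n = (if n = 0 then 0
     else if n \<le> 2 then fst (init_seed \<phi>) (n - 1)
     else fst (seed_seq \<phi> (n - 2)) ((n - 3) mod 2))"

definition s1 :: qtorus where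
  "s1 = tM (-1, 1, 0, 0) + tM (-1, -1, 1, 0) + tM (1, -1, 1, 1)"

end

theory Submission
  imports Defs
begin


lemma keys_single1: "c \<noteq> 0 \<Longrightarrow> Poly_Mapping.keys (Poly_Mapping.single k c) = {k}"
  by simp

lemma tmult_single:
  assumes "c \<noteq> 0" "d \<noteq> 0"
  shows "tmult (Poly_Mapping.single (a,i) c) (Poly_Mapping.single (b,j) d)
       = Poly_Mapping.single (a+b, i+j+lam_form a b) (c*d)"
  using assms by (simp add: tmult_def)

lemma sum4: "(\<Sum>i<(4::nat). f i) = f 0 + f 1 + f 2 + f 3"
  by (simp add: eval_nat_numeral)

lemma lam_form_eval: "lam_form (a0,a1,a2,a3) (b0,b1,b2,b3) =
   - a0*b2 - a1*b3 + a2*b0 - 2*a2*b3 + a3*b1 + 2*a3*b2"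
  by (simp add: lam_form_def sum4 vec_of_def Lam_def algebra_simps)

lemma lam_form_zero1: "lam_form (0,0,0,0) b = 0"
  by (cases b) (simp add: lam_form_eval)
lemma lam_form_zero2: "lam_form a (0,0,0,0) = 0"
  by (cases a) (simp add: lam_form_eval)



locale emb =
  fixes \<phi> :: "qtorus \<Rightarrow> 'a::division_ring"
  assumes te: "torus_embedding \<phi>"
begin

definition v where "v = \<phi> tv"
definition P where "P a = \<phi> (tM a)"
definition V where "V k = v powi k"

lemma phi_add: "\<phi> (f + g) = \<phi> f + \<phi> g" using te by (simp add: torus_embedding_def)
lemma phi_mult: "\<phi> (tmult f g) = \<phi> f * \<phi> g" using te by (simp add: torus_embedding_def)
lemma phi_one: "\<phi> (tM (0,0,0,0)) = 1" using te by (simp add: torus_embedding_def)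
lemma phi_inj: "inj \<phi>" using te by (simp add: torus_embedding_def)

abbreviation S :: "lat \<Rightarrow> int \<Rightarrow> qtorus" where "S c k \<equiv> Poly_Mapping.single (c, k) (1::int)"

lemma S_mult: "tmult (S a i) (S b j) = S (a+b) (i+j+lam_form a b)"
  by (simp add: tmult_single)

lemma phi_S0_nat: "\<phi> (S (0,0,0,0) (int m)) = v ^ m"
proof (induction m)
  case 0 then show ?case using phi_one by (simp add: tM_def)
next
  case (Suc m)
  have "S (0,0,0,0) (int (Suc m)) = tmult tv (S (0,0,0,0) (int m))"
    by (simp add: tv_def S_mult lam_form_zero1)
  then show ?case using Suc by (simp add: phi_mult v_def)
qed

lemma v_u: "v * \<phi> (S (0,0,0,0) (-1)) = 1"
proof -
  have "tmult tv (S (0,0,0,0) (-1)) = tM (0,0,0,0)"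
    by (simp add: tv_def S_mult lam_form_zero1 tM_def)
  then show ?thesis using phi_one by (metis phi_mult v_def)
qed

lemma u_v: "\<phi> (S (0,0,0,0) (-1)) * v = 1"
proof -
  have "tmult (S (0,0,0,0) (-1)) tv = tM (0,0,0,0)"
    by (simp add: tv_def S_mult lam_form_zero1 tM_def)
  then show ?thesis using phi_one by (metis phi_mult v_def)
qed

lemma v_nz: "v \<noteq> 0" using v_u by auto

lemma u_inv: "\<phi> (S (0,0,0,0) (-1)) = inverse v"
  using v_u v_nz by (metis inverse_unique)

lemma phi_S0_neg: "\<phi> (S (0,0,0,0) (- int m)) = inverse v ^ m"
proof (induction m)
  case 0 then show ?case using phi_one by (simp add: tM_def)
next
  case (Suc m)
  have "S (0,0,0,0) (- int (Suc m)) = tmult (S (0,0,0,0) (-1)) (S (0,0,0,0) (- int m))"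
    by (simp add: S_mult lam_form_zero1)
  then show ?case using Suc u_inv by (simp add: phi_mult power_commutes)
qed

lemma phi_S0: "\<phi> (S (0,0,0,0) k) = V k"
proof (cases k rule: int_cases4)
  case (nonneg n) then show ?thesis by (simp add: phi_S0_nat V_def)
next
  case (neg n) then show ?thesis by (simp add: phi_S0_neg V_def power_int_def)
qed

lemma phi_S: "\<phi> (S c k) = V k * P c"
proof -
  obtain c0 c1 c2 c3 where c: "c = (c0,c1,c2,c3)" by (cases c) auto
  have "S c k = tmult (S (0,0,0,0) k) (tM c)"
    by (simp add: c tM_def S_mult lam_form_zero1)
  then show ?thesis by (simp add: phi_mult phi_S0 P_def)
qed

lemma P_mult: "P a * P b = V (lam_form a b) * P (a+b)"
proof -
  have "tmult (tM a) (tM b) = S (a+b) (lam_form a b)" by (simp add: tM_def S_mult)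
  then show ?thesis by (metis P_def phi_S phi_mult)
qed

lemma V_P_comm: "V k * P a = P a * V k"
proof -
  obtain c0 c1 c2 c3 where c: "a = (c0,c1,c2,c3)" by (cases a) auto
  have "tmult (S (0,0,0,0) k) (tM a) = tmult (tM a) (S (0,0,0,0) k)"
    by (simp add: c tM_def S_mult lam_form_zero1 lam_form_zero2)
  then show ?thesis by (metis P_def phi_S0 phi_mult)
qed

lemma V_add: "V (k + l) = V k * V l" by (simp add: V_def power_int_add v_nz)
lemma V_0[simp]: "V 0 = 1" by (simp add: V_def)
lemma V_nz: "V k \<noteq> 0" by (simp add: V_def v_nz)
lemma V_comm: "V k * V l = V l * V k" by (metis V_add add.commute)

lemma v2_ne1: "V 2 \<noteq> 1"
proof
  assume "V 2 = 1"
  then have "\<phi> (S (0,0,0,0) 2) = \<phi> (S (0,0,0,0) 0)" using phi_S0 by simp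
  then have "S (0,0,0,0) 2 = S (0,0,0,0) 0" using phi_inj by (meson injD)
  then have "Poly_Mapping.lookup (S (0,0,0,0) 2) ((0,0,0,0),2) = Poly_Mapping.lookup (S (0,0,0,0) 0) ((0,0,0,0),2)" by simp
  then show False by (simp add: lookup_single)
qed

end


definition BB :: "nat \<Rightarrow> nat \<Rightarrow> nat \<Rightarrow> int" where
  "BB t i j = (if i \<ge> 4 \<or> j \<ge> 2 then 0
     else if j = t mod 2 then (if i = t mod 2 then 0 else if i < 2 then -2 else if i = 2 then int t + 1 else int t)
     else (if i = t mod 2 then 2 else if i < 2 then 0 else if i = 2 then - int t else 1 - int t))"

definition al :: "nat \<Rightarrow> nat \<Rightarrow> int" where "al t i = (if i = t mod 2 then int t - 1 else int t)"
definition be :: "nat \<Rightarrow> nat \<Rightarrow> int" where "be t i = (if i = t mod 2 then - int t else - int t - 1)"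

definition LL :: "nat \<Rightarrow> nat \<Rightarrow> nat \<Rightarrow> int" where
  "LL t i j = (if i < 2 \<and> j = 2 then al t i else if i < 2 \<and> j = 3 then be t i
     else if i = 2 \<and> j < 2 then - al t j else if i = 3 \<and> j < 2 then - be t j
     else if i = 2 \<and> j = 3 then -2 else if i = 3 \<and> j = 2 then 2 else 0)"

lemma BB0: "Bmat = BB 0"
  by (intro ext) (auto simp: Bmat_def BB_def)

lemma LL0: "Lam = LL 0"
  by (intro ext) (auto simp: Lam_def LL_def al_def be_def)

lemma nat_cases5: obtains "i = (0::nat)" | "i = 1" | "i = 2" | "i = 3" | "i \<ge> 4" by linarith

lemma BB_step: "mut_B (BB t) (t mod 2) = BB (Suc t)"
proof (intro ext)
  fix i j
  show "mut_B (BB t) (t mod 2) i j = BB (Suc t) i j"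
    by (cases "even t"; cases i rule: nat_cases5; cases j rule: nat_cases5)
       (auto simp: mut_B_def BB_def mod_Suc even_iff_mod_2_eq_zero odd_iff_mod_2_eq_one)
qed

lemma LL_step: "mut_L (BB t) (LL t) (t mod 2) = LL (Suc t)"
proof (intro ext)
  fix i j
  show "mut_L (BB t) (LL t) (t mod 2) i j = LL (Suc t) i j"
    by (cases "even t"; cases i rule: nat_cases5; cases j rule: nat_cases5)
       (auto simp: mut_L_def sum4 Emat_def BB_def LL_def al_def be_def mod_Suc even_iff_mod_2_eq_zero odd_iff_mod_2_eq_one)
qed



context emb begin

definition x where "x n = kron_x \<phi> n"
definition y1 where "y1 = P (0,0,1,0)"
definition y2 where "y2 = P (0,0,0,1)"
abbreviation X where "X t \<equiv> fst (seed_seq \<phi> t)"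

lemma seed_BL: "snd (seed_seq \<phi> t) = (BB t, LL t)"
proof (induction t)
  case 0 then show ?case by (simp add: init_seed_def BB0 LL0)
next
  case (Suc t)
  then show ?case
    by (cases "seed_seq \<phi> t") (simp add: mutate_def BB_step LL_step)
qed

lemma seed_X_step: "X (Suc t) = mut_X v (BB t) (LL t) (X t) (t mod 2)"
  using seed_BL[of t] by (cases "seed_seq \<phi> t") (simp add: mutate_def v_def)

lemma mut_X_other: "i \<noteq> k \<Longrightarrow> mut_X w B L Y k i = Y i"
  by (simp add: mut_X_def)

lemma seedX: "X t (t mod 2) = x (t+1) \<and> X t (1 - t mod 2) = x (t+2) \<and> X t 2 = y1 \<and> X t 3 = y2"
proof (induction t)
  case 0 then show ?case
    by (simp add: x_def kron_x_def init_seed_def lat_of_def y1_def y2_def P_def)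
next
  case (Suc t)
  have k: "t mod 2 < 2" by simp
  have a: "Suc t mod 2 = 1 - t mod 2" by (simp add: mod_Suc)
  have b: "1 - Suc t mod 2 = t mod 2" by (simp add: mod_Suc)
  have c: "x (Suc t + 2) = X (Suc t) (t mod 2)" by (simp add: x_def kron_x_def)
  have n1: "1 - t mod 2 \<noteq> t mod 2" by presburger
  show ?case using Suc k n1
    by (simp only: a b c seed_X_step mut_X_other[OF n1]) (use k in \<open>auto simp: mut_X_def\<close>)
qed

lemma x_new: "x (t+3) = mut_X v (BB t) (LL t) (X t) (t mod 2) (t mod 2)"
proof -
  have "x (t+3) = X (Suc t) (t mod 2)" by (simp add: x_def kron_x_def)
  then show ?thesis by (simp only: seed_X_step)
qed

lemma frame_eval: "frame w L Y c = w powi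
   (c 0 * c 1 * L 1 0 + c 0 * c 2 * L 2 0 + c 1 * c 2 * L 2 1 + c 0 * c 3 * L 3 0 + c 1 * c 3 * L 3 1 + c 2 * c 3 * L 3 2)
   * Y 0 powi c 0 * Y 1 powi c 1 * Y 2 powi c 2 * Y 3 powi c 3"
  by (simp add: frame_def sum4 eval_nat_numeral algebra_simps)

definition ee :: "nat \<Rightarrow> int" where "ee t = 2 * int t * int t + 2 * int t - 1"

lemma exch_even:
  assumes "even t"
  shows "x (t+3) = V (ee t) * inverse (x (t+1)) * y1 ^ (t+1) * y2 ^ t + inverse (x (t+1)) * x (t+2) ^ 2"
proof -
  have m: "t mod 2 = 0" using assms by simp
  have X0: "X t 0 = x (t+1)" and X1: "X t 1 = x (t+2)" and X2: "X t 2 = y1" and X3: "X t 3 = y2"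
    using seedX[of t] m by auto
  have X1': "X t (Suc 0) = x (t+2)" using X1 by simp
  have e: "(- int t - 1) * (1 - int t) - int t * int t + (int t + 1) * int t * 2 = ee t"
    by (simp add: ee_def algebra_simps)
  have p: "y1 powi (int t + 1) = y1 ^ (t+1)" by (metis of_nat_Suc power_int_of_nat add.commute Suc_eq_plus1)
  show ?thesis
    unfolding x_new m
    by (simp add: mut_X_def frame_eval X0 X1 X1' X2 X3 BB_def LL_def al_def be_def m V_def e p)
qed

lemma exch_odd:
  assumes "odd t"
  shows "x (t+3) = V (ee t) * inverse (x (t+1)) * y1 ^ (t+1) * y2 ^ t + x (t+2) ^ 2 * inverse (x (t+1))"
proof -
  have m: "t mod 2 = 1" using assms by presburger
  have X0: "X t 0 = x (t+2)" and X1: "X t 1 = x (t+1)" and X2: "X t 2 = y1" and X3: "X t 3 = y2"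
    using seedX[of t] m by auto
  have X1': "X t (Suc 0) = x (t+1)" using X1 by simp
  have e: "(- int t - 1) * (1 - int t) - int t * int t + (int t + 1) * int t * 2 = ee t"
    by (simp add: ee_def algebra_simps)
  have p: "y1 powi (int t + 1) = y1 ^ (t+1)" by (metis of_nat_Suc power_int_of_nat add.commute Suc_eq_plus1)
  show ?thesis
    unfolding x_new m
    by (simp add: mut_X_def frame_eval X0 X1 X1' X2 X3 BB_def LL_def al_def be_def m V_def e p)
qed

end


context emb begin

definition vc where "vc a \<longleftrightarrow> v * a = a * v"
definition qc where "qc k a b \<longleftrightarrow> a * b = V k * (b * a)"

lemma V_vc: assumes "vc a" shows "V k * a = a * V k"
proof (cases k rule: int_cases4)
  case (nonneg n)
  then show ?thesis using assms power_commuting_commutes[of v a n]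
    by (simp add: V_def vc_def)
next
  case (neg n)
  have "inverse v * a = a * inverse v"
    using assms mult_commute_imp_mult_inverse_commute[of v a] by (simp add: vc_def)
  then show ?thesis using neg power_commuting_commutes[of "inverse v" a n]
    by (simp add: V_def power_int_def)
qed

lemma V_vc': "vc a \<Longrightarrow> a * (V k * b) = V k * (a * b)"
  by (metis V_vc mult.assoc)

lemma vc_V: "vc (V k)" by (simp add: vc_def V_def power_int_commutes)
lemma vc_P: "vc (P a)" using V_P_comm[of 1 a] by (simp add: vc_def V_def)
lemma vc_mult: "vc a \<Longrightarrow> vc b \<Longrightarrow> vc (a * b)"
  by (simp add: vc_def) (metis mult.assoc)
lemma vc_add: "vc a \<Longrightarrow> vc b \<Longrightarrow> vc (a + b)"
  by (simp add: vc_def distrib_left distrib_right)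
lemma vc_inv: "vc a \<Longrightarrow> vc (inverse a)"
  unfolding vc_def using mult_commute_imp_mult_inverse_commute[of a v] by simp
lemma vc_pow: "vc a \<Longrightarrow> vc (a ^ n)"
  unfolding vc_def by (metis power_commuting_commutes)

lemma qc_cong: "qc k a b \<Longrightarrow> k = l \<Longrightarrow> qc l a b" by simp

lemma qc0: "qc 0 a b \<longleftrightarrow> a * b = b * a" by (simp add: qc_def)

lemma qc_mult_right:
  assumes "qc k a b" "qc l a c" "vc b"
  shows "qc (k+l) a (b*c)"
proof -
  have "a * (b * c) = V k * (b * (a * c))" using assms(1) by (simp add: qc_def flip: mult.assoc)
  also have "\<dots> = V k * (b * (V l * (c * a)))" using assms(2) by (simp add: qc_def)
  also have "\<dots> = V k * (V l * (b * (c * a)))" using V_vc'[OF assms(3)] by simp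
  finally show ?thesis by (simp add: qc_def V_add mult.assoc)
qed

lemma qc_mult_left:
  assumes "qc k a c" "qc l b c" "vc a"
  shows "qc (k+l) (a*b) c"
proof -
  have "a * b * c = a * (V l * (c * b))" using assms(2) by (simp add: qc_def mult.assoc)
  also have "\<dots> = V l * (a * c * b)" using V_vc'[OF assms(3)] by (simp add: mult.assoc)
  also have "\<dots> = V l * (V k * (c * a * b))" using assms(1) by (simp add: qc_def mult.assoc)
  finally have h: "a * b * c = V l * (V k * (c * a * b))" .
  have "V (k+l) * (c * a * b) = V l * (V k * (c * a * b))" by (simp add: V_add V_comm[of k l] mult.assoc)
  then show ?thesis using h by (simp add: qc_def mult.assoc)
qed

lemma qc_refl: "qc 0 a a" by (simp add: qc_def)
lemma qc_V_right: "vc a \<Longrightarrow> qc 0 a (V k)" by (simp add: qc_def V_vc)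
lemma qc_V_left: "vc b \<Longrightarrow> qc 0 (V k) b" by (simp add: qc_def V_vc)

lemma qc_pow_right: assumes "qc k a b" "vc b" shows "qc (int n * k) a (b ^ n)"
proof (induction n)
  case 0 then show ?case by (simp add: qc_def)
next
  case (Suc n)
  have "qc (k + int n * k) a (b * b ^ n)" by (rule qc_mult_right[OF assms(1) Suc assms(2)])
  then show ?case by (simp add: algebra_simps)
qed

lemma qc_pow_left: assumes "qc k a b" "vc a" shows "qc (int n * k) (a ^ n) b"
proof (induction n)
  case 0 then show ?case by (simp add: qc_def)
next
  case (Suc n)
  have "qc (k + int n * k) (a * a ^ n) b" by (rule qc_mult_left[OF assms(1) Suc assms(2)])
  then show ?case by (simp add: algebra_simps)
qed

lemma qc_add_right: "qc k a b \<Longrightarrow> qc k a c \<Longrightarrow> qc k a (b + c)"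
  by (simp add: qc_def distrib_left distrib_right)
lemma qc_add_left: "qc k a c \<Longrightarrow> qc k b c \<Longrightarrow> qc k (a + b) c"
  by (simp add: qc_def distrib_left distrib_right)

lemma qc_sym: assumes "qc k a b" shows "qc (-k) b a"
proof -
  have "V (-k) * (a * b) = V (-k) * V k * (b * a)" using assms by (simp add: qc_def mult.assoc)
  then show ?thesis by (simp add: qc_def flip: V_add)
qed

lemma qc_inv_left: assumes "qc k a b" "a \<noteq> 0" "vc a" shows "qc (-k) (inverse a) b"
proof -
  have "inverse a * (a * b) * inverse a = inverse a * (V k * (b * a)) * inverse a"
    using assms(1) by (simp add: qc_def)
  moreover have "\<And>X. inverse a * (a * X) = X" by (simp add: mult.assoc[symmetric] assms(2))
  ultimately have "b * inverse a = V k * (inverse a * b)"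
    using assms(2) V_vc'[OF vc_inv[OF assms(3)]] by (simp add: mult.assoc)
  moreover have "V (-k) * (V k * X) = X" for X
    by (simp add: mult.assoc[symmetric] flip: V_add)
  ultimately have "V (-k) * (b * inverse a) = inverse a * b"
    by simp
  then show ?thesis by (simp add: qc_def)
qed

lemma qc_inv_right: assumes "qc k a b" "b \<noteq> 0" "vc b" shows "qc (-k) a (inverse b)"
  using qc_sym[OF qc_inv_left[OF qc_sym[OF assms(1)] assms(2,3)]] by simp

lemma qc_P: "qc (lam_form a b - lam_form b a) (P a) (P b)"
proof -
  have "P a * P b = V (lam_form a b - lam_form b a) * (V (lam_form b a) * P (b + a))"
    by (simp add: P_mult add.commute flip: V_add mult.assoc)
  then show ?thesis by (simp add: qc_def P_mult)
qed

lemma P_nz: "P a \<noteq> 0"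
proof
  assume "P a = 0"
  then have "P a * P (-a) = 0" by simp
  moreover obtain c0 c1 c2 c3 where c: "a = (c0,c1,c2,c3)" by (cases a) auto
  moreover have "P (0,0,0,0) = 1" using phi_one by (simp add: P_def)
  ultimately show False using V_nz by (simp add: P_mult)
qed

end


context emb begin

definition Z :: "nat \<Rightarrow> 'a" where "Z n = V (ee (n-1)) * y1 ^ n * y2 ^ (n-1)"

definition Inv where "Inv n \<longleftrightarrow> x n \<noteq> 0 \<and> vc (x n) \<and> qc (2*(int n - 2)) (x n) y1 \<and> qc (-2*(int n - 1)) (x n) y2"

lemma x1: "x 1 = P (1,0,0,0)" by (simp add: x_def kron_x_def init_seed_def lat_of_def P_def)
lemma x2: "x 2 = P (0,1,0,0)" by (simp add: x_def kron_x_def init_seed_def lat_of_def P_def)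

lemma vc_y1: "vc y1" and vc_y2: "vc y2" by (simp_all add: y1_def y2_def vc_P)
lemma y1_nz: "y1 \<noteq> 0" and y2_nz: "y2 \<noteq> 0" by (simp_all add: y1_def y2_def P_nz)

lemma qc_y2_y1: "qc 4 y2 y1"
  using qc_P[of "(0,0,0,1)" "(0,0,1,0)"] by (simp add: y1_def y2_def lam_form_eval)

lemma vc_Z: "vc (Z n)" by (simp add: Z_def vc_mult vc_V vc_pow vc_y1 vc_y2)
lemma Z_nz: "Z n \<noteq> 0" by (simp add: Z_def V_nz y1_nz y2_nz)

lemma qc_Z_y1: "qc (int (n-1) * 4) (Z n) y1"
proof -
  have "qc (0 + int n * 0 + int (n-1) * 4) (Z n) y1"
    unfolding Z_def
    by (intro qc_mult_left qc_pow_left qc_V_left qc_refl qc_y2_y1 vc_y1 vc_y2 vc_mult vc_V vc_pow)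
  then show ?thesis by simp
qed

lemma qc_Z_y2: "qc (int n * (-4)) (Z n) y2"
proof -
  have "qc (0 + int n * (-4) + int (n-1) * 0) (Z n) y2"
    unfolding Z_def
    by (intro qc_mult_left qc_pow_left qc_V_left qc_refl qc_sym[OF qc_y2_y1, simplified] vc_y1 vc_y2 vc_mult vc_V vc_pow)
  then show ?thesis by simp
qed

lemma qc_w_Z: assumes "qc a w y1" "qc b w y2" "vc w"
  shows "qc (int n * a + int (n-1) * b) w (Z n)"
proof -
  have "qc (0 + int n * a + int (n-1) * b) w (Z n)"
    unfolding Z_def
    by (intro qc_mult_right qc_pow_right qc_V_right assms vc_y1 vc_y2 vc_mult vc_V vc_pow)
  then show ?thesis by simp
qed

lemma exch:
  assumes "n \<ge> 1" "Inv n" "x n * x (n+1) = x (n+1) * x n"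
  shows "x (n+2) = inverse (x n) * (x (n+1) ^ 2 + Z n)"
proof -
  obtain t where t: "n = t + 1" using assms(1) by (metis add.commute le_Suc_ex)
  have vcn: "vc (x n)" using assms(2) by (simp add: Inv_def)
  have c1: "inverse (x n) * (V k * b) = V k * (inverse (x n) * b)" for k b by (rule V_vc'[OF vc_inv[OF vcn]])
  have c2: "x (n+1) ^ 2 * inverse (x n) = inverse (x n) * x (n+1) ^ 2"
    using power_commuting_commutes[OF sym[OF mult_commute_imp_mult_inverse_commute[OF assms(3)]], of 2]
    by simp
  have e: "x (n+2) = x (t+3)" by (simp add: t eval_nat_numeral)
  have ts: "t + 1 = n" "t + 2 = n + 1" "n - 1 = t" using t by auto
  show ?thesis
  proof (cases "even t")
    case True
    show ?thesis unfolding e exch_even[OF True]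
      by (simp only: ts Z_def) (simp add: c1 distrib_left mult.assoc)
  next
    case False
    show ?thesis unfolding e exch_odd[OF False]
      using c2 by (simp only: ts Z_def) (simp add: c1 distrib_left mult.assoc)
  qed
qed

end


context emb begin

lemma V_neg2: "V (-2) = 1 \<Longrightarrow> False"
proof -
  assume h: "V (-2) = 1"
  have "V 2 = V 2 * V (-2)" using h by simp
  also have "\<dots> = 1" by (simp flip: V_add)
  finally show False using v2_ne1 by simp
qed

lemma inv_step:
  assumes n1: "n \<ge> 1" and In: "Inv n" and In1: "Inv (n+1)" and C: "x n * x (n+1) = x (n+1) * x n"
  shows "Inv (n+2) \<and> x (n+1) * x (n+2) = x (n+2) * x (n+1)"
proof -
  define a where "a = x n"
  define b where "b = x (n+1)"
  define A where "A = b ^ 2 + Z n"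
  have xe: "x (n+2) = inverse a * A" unfolding a_def b_def A_def by (rule exch[OF n1 In C])
  have anz: "a \<noteq> 0" and vca: "vc a" and qa1: "qc (2*(int n - 2)) a y1" and qa2: "qc (-2*(int n - 1)) a y2"
    using In by (auto simp: Inv_def a_def)
  have bnz: "b \<noteq> 0" and vcb: "vc b" and qb1: "qc (2*(int n - 1)) b y1" and qb2: "qc (-2*(int n)) b y2"
    using In1 by (auto simp: Inv_def b_def elim: qc_cong)
  have Cab: "qc 0 a b" using C by (simp add: qc0 a_def b_def)
  have vcA: "vc A" unfolding A_def by (intro vc_add vc_pow vcb vc_Z)
  have vcx: "vc (x (n+2))" unfolding xe by (intro vc_mult vc_inv vca vcA)
  have nm: "int (n - 1) = int n - 1" using n1 by simp
  have qA1: "qc (4*(int n - 1)) A y1"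
  proof -
    have "qc (int 2 * (2*(int n - 1))) (b^2) y1" by (rule qc_pow_left[OF qb1 vcb])
    moreover have "qc (int (n-1) * 4) (Z n) y1" by (rule qc_Z_y1)
    ultimately show ?thesis unfolding A_def using nm
      by (intro qc_add_left) (auto elim!: qc_cong)
  qed
  have qA2: "qc (-4 * int n) A y2"
  proof -
    have "qc (int 2 * (-2*(int n))) (b^2) y2" by (rule qc_pow_left[OF qb2 vcb])
    moreover have "qc (int n * (-4)) (Z n) y2" by (rule qc_Z_y2)
    ultimately show ?thesis unfolding A_def
      by (intro qc_add_left) (auto elim!: qc_cong)
  qed
  have q1: "qc (2*(int (n+2) - 2)) (x (n+2)) y1"
  proof -
    have "qc (- (2*(int n - 2)) + 4*(int n - 1)) (inverse a * A) y1"
      by (intro qc_mult_left qc_inv_left qa1 anz vca qA1 vc_inv)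
    then show ?thesis unfolding xe by (auto elim!: qc_cong)
  qed
  have q2: "qc (-2*(int (n+2) - 1)) (x (n+2)) y2"
  proof -
    have "qc (- (-2*(int n - 1)) + -4 * int n) (inverse a * A) y2"
      by (intro qc_mult_left qc_inv_left qa2 anz vca qA2 vc_inv)
    then show ?thesis unfolding xe by (auto elim!: qc_cong)
  qed
  have Anz: "A \<noteq> 0"
  proof
    assume A0: "A = 0"
    have "qc (int 2 * 0) a (b^2)" by (rule qc_pow_right[OF Cab vcb])
    then have c0: "a * b^2 = b^2 * a" by (simp add: qc_def)
    have "qc (int n * (2*(int n - 2)) + int (n-1) * (-2*(int n - 1))) a (Z n)"
      by (rule qc_w_Z[OF qa1 qa2 vca])
    then have qZ: "qc (-2) a (Z n)" using nm by (auto elim!: qc_cong simp: algebra_simps)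
    have Zb: "Z n = - (b ^ 2)" using A0 unfolding A_def by (simp add: eq_neg_iff_add_eq_0 add.commute)
    have "a * Z n = Z n * a" using c0 Zb by simp
    then have "Z n * a = V (-2) * (Z n * a)" using qZ by (simp add: qc_def)
    then have "(V (-2) - 1) * (Z n * a) = 0" by (simp add: algebra_simps)
    then have "V (-2) - 1 = 0" using Z_nz anz by simp
    then show False using V_neg2 by simp
  qed
  have xnz: "x (n+2) \<noteq> 0" unfolding xe using anz Anz by simp
  have qbA: "qc 0 b A"
  proof -
    have "qc (int 2 * 0) b (b^2)" by (rule qc_pow_right[OF qc_refl vcb])
    moreover have "qc (int n * (2*(int n - 1)) + int (n-1) * (-2*(int n))) b (Z n)"
      by (rule qc_w_Z[OF qb1 qb2 vcb])
    ultimately show ?thesis unfolding A_def using nm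
      by (intro qc_add_right) (auto elim!: qc_cong simp: algebra_simps)
  qed
  have "qc (- 0 + 0) b (inverse a * A)"
    by (intro qc_mult_right qc_inv_right qc_sym[OF Cab, simplified] anz vca qbA vc_inv)
  then have Cn: "b * x (n+2) = x (n+2) * b" unfolding xe by (simp add: qc_def)
  show ?thesis using xnz vcx q1 q2 Cn by (simp add: Inv_def b_def)
qed

lemma base_inv: "Inv 1 \<and> Inv 2 \<and> x 1 * x 2 = x 2 * x 1"
proof -
  have x1': "x (Suc 0) = P (1,0,0,0)" using x1 by simp
  have x2': "x (Suc (Suc 0)) = P (0,1,0,0)" using x2 by (simp add: eval_nat_numeral)
  have a: "qc (-2) (x 1) y1" using qc_P[of "(1,0,0,0)" "(0,0,1,0)"] by (simp add: x1 x1' x2' y1_def lam_form_eval)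
  have b: "qc 0 (x 1) y2" using qc_P[of "(1,0,0,0)" "(0,0,0,1)"] by (simp add: x1 x1' x2' y2_def lam_form_eval)
  have c: "qc 0 (x 2) y1" using qc_P[of "(0,1,0,0)" "(0,0,1,0)"] by (simp add: x2 x1' x2' y1_def lam_form_eval)
  have d: "qc (-2) (x 2) y2" using qc_P[of "(0,1,0,0)" "(0,0,0,1)"] by (simp add: x2 x1' x2' y2_def lam_form_eval)
  have e: "qc 0 (x 1) (x 2)" using qc_P[of "(1,0,0,0)" "(0,1,0,0)"] by (simp add: x1 x1' x2' x2 lam_form_eval)
  show ?thesis using a b c d e by (simp add: Inv_def x1 x2 x1' x2' P_nz vc_P qc0)
qed

lemma invariants: "n \<ge> 1 \<Longrightarrow> Inv n \<and> Inv (n+1) \<and> x n * x (n+1) = x (n+1) * x n"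
proof (induction n rule: dec_induct)
  case base then show ?case using base_inv by (simp add: eval_nat_numeral)
next
  case (step m)
  then show ?case using inv_step[of m] by (simp add: eval_nat_numeral)
qed

end


context emb begin

lemma qc_x_Z: assumes "n \<ge> 1" shows "qc (-2) (x n) (Z n)"
proof -
  have In: "Inv n" using invariants[OF assms] by simp
  have nm: "int (n - 1) = int n - 1" using assms by simp
  have "qc (int n * (2*(int n - 2)) + int (n-1) * (-2*(int n - 1))) (x n) (Z n)"
    using In by (intro qc_w_Z) (auto simp: Inv_def)
  then show ?thesis using nm by (auto elim!: qc_cong simp: algebra_simps)
qed

lemma exch1: assumes "n \<ge> 1" shows "x n * x (n+2) = x (n+1) ^ 2 + Z n"
proof -
  have I: "Inv n" "x n * x (n+1) = x (n+1) * x n" using invariants[OF assms] by auto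
  have nz: "x n \<noteq> 0" using I by (simp add: Inv_def)
  show ?thesis unfolding exch[OF assms I] by (simp add: nz mult.assoc[symmetric])
qed

lemma exch2: assumes "n \<ge> 1" shows "x (n+2) * x n = x (n+1) ^ 2 + V 2 * Z n"
proof -
  have I: "Inv n" "x n * x (n+1) = x (n+1) * x n" using invariants[OF assms] by auto
  have nz: "x n \<noteq> 0" and vca: "vc (x n)" using I by (auto simp: Inv_def)
  have c: "x (n+1) ^ 2 * x n = x n * x (n+1) ^ 2"
    using power_commuting_commutes[OF sym[OF I(2)], of 2] by simp
  have z: "Z n * x n = V 2 * (x n * Z n)" using qc_sym[OF qc_x_Z[OF assms]] by (simp add: qc_def)
  have "x (n+2) * x n = inverse (x n) * (x (n+1) ^ 2 * x n + Z n * x n)"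
    unfolding exch[OF assms I] by (simp add: mult.assoc distrib_right)
  also have "\<dots> = inverse (x n) * (x n * (x (n+1) ^ 2 + V 2 * Z n))"
    using c z V_vc'[OF vca] by (simp add: distrib_left)
  also have "\<dots> = x (n+1) ^ 2 + V 2 * Z n" by (simp add: nz mult.assoc[symmetric])
  finally show ?thesis .
qed

lemma P_mult': "P a * (P b * W) = V (lam_form a b) * (P (a+b) * W)"
  by (simp add: P_mult flip: mult.assoc)
lemma P_V: "P a * (V k * W) = V k * (P a * W)" by (rule V_vc'[OF vc_P])
lemma V_V: "V k * (V l * W) = V (k+l) * W" by (simp add: V_add mult.assoc)
lemma V_V': "V k * V l = V (k+l)" by (simp add: V_add)

lemma Zrel: "V 2 * (V 2 * (Z (m+1) * (y1 * y2))) = Z (m+2)"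
proof -
  have c: "y2 ^ m * y1 = V (int m * 4) * (y1 * y2 ^ m)"
    using qc_pow_left[OF qc_y2_y1 vc_y2, of m] by (simp add: qc_def)
  have cy: "y1 ^ k * (V j * W) = V j * (y1 ^ k * W)" for k j W
    by (rule V_vc'[OF vc_pow[OF vc_y1]])
  have "Z (m+1) * (y1 * y2) = V (ee m) * (y1 ^ (m+1) * ((y2 ^ m * y1) * y2))"
    by (simp add: Z_def mult.assoc)
  also have "\<dots> = V (ee m) * (V (int m * 4) * (y1 ^ (m+2) * y2 ^ (m+1)))"
  proof -
    have p1: "y1 ^ (m+1) * (y1 * W) = y1 ^ (m+2) * W" for W
      by (simp add: mult.assoc[symmetric] eval_nat_numeral power_Suc2[symmetric] del: power_Suc)
    have p2: "y2 ^ m * y2 = y2 ^ (m+1)" by (simp add: power_Suc2[symmetric] del: power_Suc)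
    show ?thesis by (simp only: c mult.assoc cy p1 p2)
  qed
  finally have "V 2 * (V 2 * (Z (m+1) * (y1 * y2))) = V (2 + (2 + (ee m + int m * 4))) * (y1 ^ (m+2) * y2 ^ (m+1))"
    by (simp only: V_V mult.assoc)
  also have "2 + (2 + (ee m + int m * 4)) = ee (m+1)" by (simp add: ee_def algebra_simps)
  finally show ?thesis by (simp add: Z_def mult.assoc)
qed

lemma phi_s1: "\<phi> s1 = P (-1,1,0,0) + P (-1,-1,1,0) + P (1,-1,1,1)"
  by (simp add: s1_def phi_add P_def)

lemma G2: "x 2 * \<phi> s1 = x 3 + V 2 * x 1 * y1 * y2"
proof -
  have I: "Inv 1" "x 1 * x 2 = x 2 * x 1" using base_inv by auto
  have nz: "x 1 \<noteq> 0" and vca: "vc (x 1)" using I by (auto simp: Inv_def)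
  have e1: "x 1 * x 3 = x 2 ^ 2 + V (-1) * y1" using exch1[of 1] unfolding numeral_3_eq_3 numeral_2_eq_2 by (simp add: Z_def ee_def)
  have "x 2 * (x 1 * \<phi> s1) = x 2 ^ 2 + V (-1) * y1 + V 2 * (x 1 * (x 1 * (y1 * y2)))"
    unfolding x1 x2 phi_s1 y1_def y2_def
    by (simp add: distrib_left power2_eq_square P_mult' P_V V_V V_V' P_mult lam_form_eval)
  moreover have sw: "x 1 * (x 2 * \<phi> s1) = x 2 * (x 1 * \<phi> s1)" by (metis I(2) mult.assoc)
  ultimately have "x 1 * (x 2 * \<phi> s1) = x 1 * (x 3 + V 2 * x 1 * y1 * y2)"
    using e1 V_vc'[OF vca] sw by (simp add: distrib_left mult.assoc)
  then show ?thesis using nz by simp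
qed

lemma Gn: "n \<ge> 2 \<Longrightarrow> x n * \<phi> s1 = x (n+1) + V 2 * x (n-1) * y1 * y2"
proof (induction n rule: dec_induct)
  case base then show ?case using G2 by (simp add: eval_nat_numeral)
next
  case (step n)
  have n1: "n \<ge> 1" using step by simp
  have I: "Inv n" "x n * x (n+1) = x (n+1) * x n" using invariants[OF n1] by auto
  have I1: "Inv (n+1)" using invariants[OF n1] by auto
  have nz: "x n \<noteq> 0" and vca: "vc (x n)" using I by (auto simp: Inv_def)
  have vcb: "vc (x (n+1))" using I1 by (auto simp: Inv_def)
  obtain m where m: "n = m + 2" using step(1) by (metis add.commute le_Suc_ex)
  have e2: "x (n+1) * x (n-1) = x n ^ 2 + V 2 * Z (n-1)"
    using exch2[of "m+1"] by (simp add: m eval_nat_numeral)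
  have zr: "V 2 * (V 2 * (Z (n-1) * (y1 * y2))) = Z n"
    using Zrel[of m] by (simp add: m eval_nat_numeral)
  have e1: "x n * x (n+2) = x (n+1) ^ 2 + Z n" by (rule exch1[OF n1])
  have "x n * (x (n+1) * \<phi> s1) = x (n+1) * (x n * \<phi> s1)" by (metis I(2) mult.assoc)
  also have "\<dots> = x (n+1) * (x (n+1) + V 2 * (x (n-1) * (y1 * y2)))"
    using step(3) by (simp add: mult.assoc)
  also have "\<dots> = x (n+1) ^ 2 + V 2 * ((x (n+1) * x (n-1)) * (y1 * y2))"
    using V_vc'[OF vcb] by (simp add: distrib_left power2_eq_square mult.assoc)
  also have "\<dots> = x (n+1) ^ 2 + V 2 * (x n ^ 2 * (y1 * y2)) + V 2 * (V 2 * (Z (n-1) * (y1 * y2)))"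
    unfolding e2 by (simp add: distrib_left distrib_right mult.assoc add.assoc)
  also have "\<dots> = x n * (x (n+2) + V 2 * (x n * (y1 * y2)))"
    unfolding zr using e1 V_vc'[OF vca] by (simp add: distrib_left power2_eq_square mult.assoc algebra_simps)
  finally have "x n * (x (n+1) * \<phi> s1) = x n * (x (n+2) + V 2 * (x n * (y1 * y2)))" .
  then show ?case using nz by (simp add: mult.assoc)
qed

end

theorem mainTheorem6:
  fixes \<phi> :: "qtorus \<Rightarrow> 'a::division_ring" and n :: nat
  assumes "torus_embedding \<phi>" and "n \<ge> 2"
  shows "kron_x \<phi> n * \<phi> s1
       = kron_x \<phi> (n + 1)
         + (\<phi> tv) ^ 2 * kron_x \<phi> (n - 1) * \<phi> (tM (0, 0, 1, 0)) * \<phi> (tM (0, 0, 0, 1))"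
proof -
  interpret emb \<phi> by (rule emb.intro[OF assms(1)])
  show ?thesis using Gn[OF assms(2)]
    by (simp add: x_def y1_def y2_def P_def V_def v_def)
qed

end
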